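(* Let $n\geq 1$ and let $\varphi=\frac{1+\sqrt5}{2}$. If ${\bf f}[n]=a$, then $V(n)=\lceil n/\varphi^2\rceil$, equivalently $V(n)$ equals the number of occurrences of $b$ in ${\bf f}(0..n]$ plus one. If ${\bf f}[n]=b$, then $V(n)=\lceil n/\varphi^3\rceil$, equivalently $V(n)$ equals the number of occurrences of the factor $aa$ in ${\bf f}(0..n]$ plus one.
   Context: Fibonacci numbers: $F_0=0$, $F_1=1$, $F_{m+2}=F_{m+1}+F_m$. Standard Fibonacci words over $\{a,b\}$: $f_{-1}=b$, $f_0=a$, $f_{m+1}=f_mf_{m-1}$ for $m\geq 0$ (so $|f_m|=F_{m+2}$). The Fibonacci infinite word is ${\bf f}=\lim_{m\to\infty} f_m=abaababaab\cdots$, indexed from ${\bf f}[1]=a$; ${\bf f}(0..j]$ denotes its prefix of length $j$. For nonnegative integers $k_m,\dots,k_0$, $[k_m\cdots k_0]_F$ denotes $\sum_{i=0}^m k_iF_{i+2}$. A representation $N=[k_m\cdots k_0]_F$ with all $k_i\geq 0$ is valid if ${\bf f}(0..N]=f_m^{k_m}\cdots f_0^{k_0}$. $V(N)$ denotes the number of valid representations of $N$ (up to leading zeros), i.e. the number of factorizations of ${\bf f}(0..N]$ as a concatenation $f_m^{k_m}\cdots f_0^{k_0}$ of standard words $f_i$, $i\geq 0$, in non-strictly decreasing order of index; $V(0)=1$. *)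

theory Defs
  imports Complex_Main
begin

datatype letter = A | B

fun fw :: "nat \<Rightarrow> letter list" where
  "fw 0 = [A]"
| "fw (Suc 0) = [A, B]"
| "fw (Suc (Suc m)) = fw (Suc m) @ fw m"

text \<open>The Fibonacci infinite word, 1-indexed: f[i] (i >= 1). Every f_m is a prefix
  of f_{m+1}, and |f_i| >= i+1, so the limit's i-th letter is the i-th letter of f_i.\<close>
definition fib_inf :: "nat \<Rightarrow> letter" where
  "fib_inf i = fw i ! (i - 1)"

definition fib_prefix :: "nat \<Rightarrow> letter list" where
  "fib_prefix j = take j (fw j)"

text \<open>A representation is a list ks with ks ! i = k_i (no leading zeros, i.e. last
  entry nonzero). Its word is f_m^{k_m} ... f_0^{k_0}.\<close>
definition rep_word :: "nat list \<Rightarrow> letter list" where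
  "rep_word ks = concat (map (\<lambda>i. concat (replicate (ks ! i) (fw i))) (rev [0..<length ks]))"

definition valid_reps :: "nat \<Rightarrow> nat list set" where
  "valid_reps N = {ks. (ks = [] \<or> last ks \<noteq> 0) \<and> rep_word ks = fib_prefix N}"

definition V :: "nat \<Rightarrow> nat" where
  "V N = card (valid_reps N)"

definition count_b :: "letter list \<Rightarrow> nat" where
  "count_b w = length (filter (\<lambda>c. c = B) w)"

definition count_aa :: "letter list \<Rightarrow> nat" where
  "count_aa w = card {i. Suc i < length w \<and> w ! i = A \<and> w ! Suc i = A}"

definition phi :: real where
  "phi = (1 + sqrt 5) / 2"

end

theory Submission
  imports Defs
begin

fun sg :: "letter \<Rightarrow> letter list" where
  "sg A = [A, B]"
| "sg B = [A]"

definition sig :: "letter list \<Rightarrow> letter list" where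
  "sig w = concat (map sg w)"

lemma sig_Nil[simp]: "sig [] = []" and sig_Cons[simp]: "sig (x # w) = sg x @ sig w"
  and sig_append[simp]: "sig (u @ w) = sig u @ sig w"
  by (auto simp: sig_def)

lemma sig_replicate_B[simp]: "sig (replicate i B) = replicate i A"
  by (induction i) auto

lemma sig_eq_Nil_iff[simp]: "sig w = [] \<longleftrightarrow> w = []"
  by (cases w; cases "hd w") auto

lemma hd_sig: "w \<noteq> [] \<Longrightarrow> hd (sig w) = A"
  by (cases w; cases "hd w") auto

lemma last_sig: "w \<noteq> [] \<Longrightarrow> last (sig w) = (if last w = A then B else A)"
proof (induction w rule: rev_induct)
  case (snoc x xs) then show ?case by (cases x) auto
qed simp

lemma sig_inj: "sig x = sig y \<Longrightarrow> x = y"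
proof (induction x arbitrary: y)
  case Nil then show ?case by (metis sig_eq_Nil_iff)
next
  case (Cons a x)
  show ?case
  proof (cases y)
    case Nil then show ?thesis using Cons.prems by (metis sig_eq_Nil_iff)
  next
    case (Cons b y')
    have hs: "sig z = [] \<or> hd (sig z) = A" for z using hd_sig by auto
    show ?thesis
    proof (cases a; cases b)
      assume "a = A" "b = B"
      then have "sig y' = B # sig x" using Cons.prems \<open>y = b # y'\<close> by simp
      then show ?thesis using hs[of y'] by simp
    next
      assume "a = B" "b = A"
      then show ?thesis using Cons.prems \<open>y = b # y'\<close> hs[of x] by auto
    qed (use Cons.IH Cons.prems \<open>y = b # y'\<close> in auto)
  qed
qed

lemma sig_concat: "sig (concat xs) = concat (map sig xs)"
  by (induction xs) auto

lemma sig_concat_replicate: "sig (concat (replicate k w)) = concat (replicate k (sig w))"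
  by (induction k) auto

lemma fw_Suc_aux: "fw (Suc k) = sig (fw k) \<and> fw (Suc (Suc k)) = sig (fw (Suc k))"
proof (induction k)
  case 0 then show ?case by simp
next
  case (Suc k)
  have "fw (Suc (Suc k)) = sig (fw (Suc k))" using Suc by blast
  moreover have "fw (Suc (Suc (Suc k))) = sig (fw (Suc (Suc k)))"
  proof -
    have "fw (Suc (Suc (Suc k))) = fw (Suc (Suc k)) @ fw (Suc k)" by simp
    also have "\<dots> = sig (fw (Suc k)) @ sig (fw k)" using Suc by metis
    also have "\<dots> = sig (fw (Suc (Suc k)))" by simp
    finally show ?thesis .
  qed
  ultimately show ?case by blast
qed

lemma fw_Suc: "fw (Suc k) = sig (fw k)"
  using fw_Suc_aux by blast

lemma concat_replicate_single: "concat (replicate k [x]) = replicate k x"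
  by (induction k) auto

lemma rep_word_Nil[simp]: "rep_word [] = []"
  by (simp add: rep_word_def)

lemma rep_word_Cons: "rep_word (k # ks) = sig (rep_word ks) @ replicate k A"
proof -
  define g where "g = (\<lambda>i. concat (replicate ((k # ks) ! i) (fw i)))"
  have u0: "rev [Suc 0..<Suc n] = map Suc (rev [0..<n])" for n
    by (metis map_Suc_upt rev_map)
  have u: "rev [0..<Suc (length ks)] = map Suc (rev [0..<length ks]) @ [0]"
    using u0 by (simp add: upt_conv_Cons del: upt_Suc)
  have "rep_word (k # ks) = concat (map g (rev [0..<Suc (length ks)]))"
    by (simp add: rep_word_def g_def del: upt_Suc)
  also have "\<dots> = concat (map (g \<circ> Suc) (rev [0..<length ks])) @ g 0"
    by (simp only: u map_append concat_append map_map) simp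
  also have "map (g \<circ> Suc) (rev [0..<length ks])
      = map (\<lambda>i. sig (concat (replicate (ks ! i) (fw i)))) (rev [0..<length ks])"
    by (simp add: g_def fw_Suc sig_concat_replicate)
  also have "g 0 = replicate k A"
    by (simp add: g_def concat_replicate_single)
  finally show ?thesis
    by (simp add: rep_word_def sig_concat map_map o_def)
qed



definition ca :: "letter list \<Rightarrow> nat" where
  "ca w = length (filter (\<lambda>c. c = A) w)"

lemma ca_simps[simp]: "ca [] = 0" "ca (x # w) = (if x = A then 1 else 0) + ca w"
  "ca (u @ w) = ca u + ca w"
  by (auto simp: ca_def)

lemma cb_simps[simp]: "count_b [] = 0" "count_b (x # w) = (if x = B then 1 else 0) + count_b w"
  "count_b (u @ w) = count_b u + count_b w"
  by (auto simp: count_b_def)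

lemma ca_cb_len: "ca w + count_b w = length w"
proof (induction w)
  case (Cons x w) then show ?case by (cases x) auto
qed simp

lemma length_sig: "length (sig x) = length x + ca x"
proof (induction x)
  case (Cons x w) then show ?case by (cases x) auto
qed simp

lemma cb_sig: "count_b (sig x) = ca x"
proof (induction x)
  case (Cons x w) then show ?case by (cases x) auto
qed simp

lemma cb_rep_A[simp]: "count_b (replicate j A) = 0"
  by (induction j) auto

definition canon :: "nat list \<Rightarrow> bool" where
  "canon ks \<longleftrightarrow> ks = [] \<or> last ks \<noteq> 0"

definition R :: "letter list \<Rightarrow> nat list set" where
  "R w = {ks. canon ks \<and> rep_word ks = w}"

definition C :: "letter list \<Rightarrow> nat" where
  "C w = card (R w)"

lemma V_C: "V N = C (fib_prefix N)"
  by (simp add: V_def C_def R_def valid_reps_def canon_def)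

lemma canon_Cons: "canon (k # ks) \<longleftrightarrow> (if ks = [] then k \<noteq> 0 else canon ks)"
  by (auto simp: canon_def)

lemma rep_props: "canon ks \<Longrightarrow> ks \<noteq> [] \<Longrightarrow>
   rep_word ks \<noteq> [] \<and> hd (rep_word ks) = A \<and> length ks \<le> length (rep_word ks)"
proof (induction ks)
  case Nil then show ?case by simp
next
  case (Cons k ks)
  show ?case
  proof (cases "ks = []")
    case True
    then have "k \<noteq> 0" using Cons.prems by (simp add: canon_Cons)
    then show ?thesis using True by (cases k) (auto simp: rep_word_Cons)
  next
    case False
    then have "canon ks" using Cons.prems by (simp add: canon_Cons)
    then have ih: "rep_word ks \<noteq> [] \<and> hd (rep_word ks) = A \<and> length ks \<le> length (rep_word ks)"
      using Cons.IH False by blast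
    then have "ca (rep_word ks) \<ge> 1" by (cases "rep_word ks") auto
    then have "length (sig (rep_word ks)) \<ge> length ks + 1" using ih length_sig by simp
    then show ?thesis using ih hd_sig by (auto simp: rep_word_Cons)
  qed
qed

lemma rep_nth: "i < length ks \<Longrightarrow> ks ! i \<le> length (rep_word ks)"
proof (induction ks arbitrary: i)
  case Nil then show ?case by simp
next
  case (Cons k ks)
  show ?case
  proof (cases i)
    case 0 then show ?thesis by (simp add: rep_word_Cons)
  next
    case (Suc j)
    then have "ks ! j \<le> length (rep_word ks)" using Cons by simp
    then show ?thesis using Suc length_sig[of "rep_word ks"] by (simp add: rep_word_Cons)
  qed
qed

lemma finite_R: "finite (R w)"
proof -
  have "R w \<subseteq> {ks. set ks \<subseteq> {0..length w} \<and> length ks \<le> length w}"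
  proof
    fix ks assume "ks \<in> R w"
    then have c: "canon ks" and r: "rep_word ks = w" by (auto simp: R_def)
    have "length ks \<le> length w" using rep_props[OF c] r by (cases "ks = []") auto
    moreover have "set ks \<subseteq> {0..length w}"
      using rep_nth r by (auto simp: in_set_conv_nth)
    ultimately show "ks \<in> {ks. set ks \<subseteq> {0..length w} \<and> length ks \<le> length w}" by simp
  qed
  then show ?thesis using finite_lists_length_le[of "{0..length w}" "length w"]
    by (rule finite_subset) simp
qed

lemma sig_not_BB: "sig x \<noteq> y @ [B, B]"
proof (cases x rule: rev_cases)
  case (snoc x' c) then show ?thesis by (cases c) auto
qed simp

lemma sig_not_B: "sig x \<noteq> [B]"
  using hd_sig[of x] by (cases "x = []") auto

lemma rep_not_BB: "rep_word ks \<noteq> y @ [B, B]"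
proof (cases ks)
  case (Cons k ks')
  show ?thesis
  proof (cases k)
    case 0 then show ?thesis using Cons sig_not_BB by (simp add: rep_word_Cons)
  next
    case (Suc k') then show ?thesis using Cons
      by (simp add: rep_word_Cons replicate_append_same[symmetric])
  qed
qed simp

lemma rep_not_B: "rep_word ks \<noteq> [B]"
proof (cases ks)
  case (Cons k ks')
  show ?thesis
  proof (cases k)
    case 0 then show ?thesis using Cons sig_not_B by (simp add: rep_word_Cons)
  next
    case (Suc k') then show ?thesis using Cons
      by (cases "sig (rep_word ks')") (auto simp: rep_word_Cons)
  qed
qed simp

lemma C_BB: "C (y @ [B, B]) = 0"
  using rep_not_BB by (simp add: C_def R_def)

lemma C_B: "C [B] = 0"
  using rep_not_B by (simp add: C_def R_def)

lemma C_Nil: "C [] = 1"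
proof -
  have "R [] = {[]}"
  proof
    show "R [] \<subseteq> {[]}"
    proof
      fix ks assume "ks \<in> R []"
      then have "canon ks" "rep_word ks = []" by (auto simp: R_def)
      then show "ks \<in> {[]}" using rep_props[of ks] by auto
    qed
  qed (auto simp: R_def canon_def)
  then show ?thesis by (simp add: C_def)
qed


lemma sigeq:
  assumes u: "u = [] \<or> last u = A"
    and e: "sig r @ replicate k A = sig u @ replicate j A"
  shows "k \<le> j \<and> r = u @ replicate (j - k) B"
proof (cases "k \<le> j")
  case False
  then have "replicate k A = replicate (k - j) A @ replicate j A"
    by (simp add: replicate_add[symmetric])
  then have e2: "sig r @ replicate (k - j) A = sig u" using e by simp
  have "k - j > 0" using False by simp
  then have l: "last (sig r @ replicate (k - j) A) = A" by simp
  show ?thesis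
  proof (cases "u = []")
    case True then show ?thesis using e2 \<open>k - j > 0\<close> by simp
  next
    case False
    then have "last (sig u) = B" using u last_sig by simp
    then show ?thesis using e2 l by simp
  qed
next
  case True
  then have "replicate j A = replicate (j - k) A @ replicate k A"
    by (simp add: replicate_add[symmetric])
  then have "sig r = sig u @ replicate (j - k) A" using e by simp
  also have "\<dots> = sig (u @ replicate (j - k) B)" by simp
  finally show ?thesis using True sig_inj by blast
qed

lemma Crec:
  assumes u: "u = [] \<or> last u = A"
  shows "C (sig u @ replicate j A) = C u + (if j > 0 then C (u @ [B]) else 0)"
proof (cases "sig u @ replicate j A = []")
  case True
  then have "u = []" "j = 0" by auto
  then show ?thesis by simp
next
  case False
  define w where "w = sig u @ replicate j A"
  have wne: "w \<noteq> []" using False w_def by simp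
  have eq: "R w = Cons j ` R u \<union> (if j > 0 then Cons (j - 1) ` R (u @ [B]) else {})"
  proof
    show "R w \<subseteq> Cons j ` R u \<union> (if j > 0 then Cons (j - 1) ` R (u @ [B]) else {})"
    proof
      fix ks assume ks: "ks \<in> R w"
      then have "ks \<noteq> []" using wne by (auto simp: R_def)
      then obtain k ks' where ksd: "ks = k # ks'" by (cases ks) auto
      have cks: "canon ks'" using ks ksd by (auto simp: R_def canon_Cons canon_def split: if_splits)
      have "sig (rep_word ks') @ replicate k A = sig u @ replicate j A"
        using ks ksd by (simp add: R_def w_def rep_word_Cons)
      then have kj: "k \<le> j" and rr: "rep_word ks' = u @ replicate (j - k) B"
        using sigeq[OF u] by blast+
      show "ks \<in> Cons j ` R u \<union> (if j > 0 then Cons (j - 1) ` R (u @ [B]) else {})"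
      proof (cases "j - k")
        case 0
        then have "k = j" using kj by simp
        then show ?thesis using rr 0 cks ksd by (auto simp: R_def)
      next
        case (Suc d)
        show ?thesis
        proof (cases d)
          case 0
          then have "k = j - 1" "j > 0" using Suc kj by auto
          then show ?thesis using rr Suc 0 cks ksd by (auto simp: R_def)
        next
          case (Suc d')
          then have "replicate (j - k) B = replicate d' B @ [B, B]"
            using \<open>j - k = Suc d\<close> by (simp add: replicate_append_same[symmetric])
          then have "rep_word ks' = (u @ replicate d' B) @ [B, B]" using rr by simp
          then show ?thesis using rep_not_BB by blast
        qed
      qed
    qed
  next
    show "Cons j ` R u \<union> (if j > 0 then Cons (j - 1) ` R (u @ [B]) else {}) \<subseteq> R w"
    proof
      fix ks assume ks: "ks \<in> Cons j ` R u \<union> (if j > 0 then Cons (j - 1) ` R (u @ [B]) else {})"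
      show "ks \<in> R w"
      proof (cases "ks \<in> Cons j ` R u")
        case True
        then obtain ks' where ksd: "ks = j # ks'" and k': "ks' \<in> R u" by auto
        have "canon ks"
        proof (cases "ks' = []")
          case True
          then have "u = []" using k' by (auto simp: R_def)
          then have "j \<noteq> 0" using wne w_def by auto
          then show ?thesis using ksd True by (simp add: canon_Cons)
        next
          case False then show ?thesis using ksd k' by (simp add: canon_Cons R_def)
        qed
        then show ?thesis using ksd k' by (simp add: R_def rep_word_Cons w_def)
      next
        case False
        then have jp: "j > 0" and "ks \<in> Cons (j - 1) ` R (u @ [B])" using ks by (auto split: if_splits)
        then obtain ks' where ksd: "ks = (j - 1) # ks'" and k': "ks' \<in> R (u @ [B])" by auto
        have "ks' \<noteq> []" using k' by (auto simp: R_def)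
        then have "canon ks" using ksd k' by (simp add: canon_Cons R_def)
        moreover have "replicate j A = A # replicate (j - 1) A" using jp by (cases j) auto
        ultimately show ?thesis using ksd k' by (simp add: R_def rep_word_Cons w_def)
      qed
    qed
  qed
  show ?thesis
  proof (cases "j > 0")
    case True
    have d: "Cons j ` R u \<inter> Cons (j - 1) ` R (u @ [B]) = {}" using True by auto
    have "C w = card (Cons j ` R u) + card (Cons (j - 1) ` R (u @ [B]))"
      unfolding C_def eq using True d finite_R by (simp add: card_Un_disjoint)
    then show ?thesis using True by (simp add: card_image C_def w_def)
  next
    case False
    then show ?thesis unfolding C_def w_def[symmetric] eq by (simp add: card_image)
  qed
qed


fun nobb :: "letter list \<Rightarrow> bool" where
  "nobb (B # B # r) = False"
| "nobb (x # r) = nobb r"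
| "nobb [] = True"

fun noaaa :: "letter list \<Rightarrow> bool" where
  "noaaa (A # A # A # r) = False"
| "noaaa (x # r) = noaaa r"
| "noaaa [] = True"

lemma nobb_Cons: "nobb (x # r) = (if x = B \<and> r \<noteq> [] \<and> hd r = B then False else nobb r)"
  by (cases x; cases r; cases "hd r") auto

lemma noaaa_Cons: "noaaa (x # r) = (if x = A \<and> take 2 r = [A, A] then False else noaaa r)"
proof (cases r)
  case (Cons y r')
  then show ?thesis by (cases x; cases y; cases r'; cases "hd r'") auto
qed (cases x; auto)

declare nobb.simps(2)[simp del] noaaa.simps(2)[simp del]

lemma nobb_append1: "nobb (v @ w) \<Longrightarrow> nobb v"
  by (induction v) (auto simp: nobb_Cons split: if_splits)

lemma noaaa_append1: "noaaa (v @ w) \<Longrightarrow> noaaa v"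
proof (induction v)
  case (Cons x v)
  then show ?case
    by (cases v; cases "tl v") (auto simp: noaaa_Cons split: if_splits)
qed simp

lemma nobb_BB: "\<not> nobb (y @ [B, B])"
  by (induction y) (auto simp: nobb_Cons)

lemma noaaa_AAA: "\<not> noaaa (y @ [A, A, A])"
proof (induction y)
  case (Cons x y) then show ?case by (auto simp: noaaa_Cons)
qed (simp add: noaaa_Cons)

lemma nobb_sig: "nobb (sig x)"
proof (induction x)
  case (Cons c x)
  have "sig x = [] \<or> hd (sig x) = A" using hd_sig by auto
  then show ?case using Cons by (cases c) (auto simp: nobb_Cons)
qed simp

lemma noaaa_sig: "nobb x \<Longrightarrow> noaaa (sig x)"
proof (induction x)
  case Nil then show ?case by simp
next
  case (Cons c x)
  have nx: "nobb x" using Cons.prems by (simp add: nobb_Cons split: if_splits)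
  have ih: "noaaa (sig x)" using Cons.IH nx by blast
  show ?case
  proof (cases c)
    case A then show ?thesis using ih by (simp add: noaaa_Cons)
  next
    case B
    show ?thesis
    proof (cases x)
      case Nil then show ?thesis using B by (simp add: noaaa_Cons)
    next
      case (Cons d x')
      then have "d = A" using Cons.prems B by (cases d) (auto simp: nobb_Cons)
      then show ?thesis using ih B Cons by (simp add: noaaa_Cons)
    qed
  qed
qed

definition pre :: "letter list \<Rightarrow> bool" where
  "pre v \<longleftrightarrow> (\<exists>k z. fw k = v @ z)"

lemma fw_ext: "\<exists>z. fw (Suc k) = fw k @ z"
  by (cases k) auto

lemma fw_nonempty: "fw k \<noteq> []"
  by (induction k rule: fw.induct) auto

lemma fw_hd: "hd (fw k) = A"
  by (cases k) (auto simp: fw_Suc hd_sig fw_nonempty)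

lemma fw_nobb: "nobb (fw k)"
  by (cases k) (auto simp: fw_Suc nobb_sig)

lemma fw_noaaa: "noaaa (fw k)"
  by (cases k) (auto simp: fw_Suc noaaa_sig fw_nobb)

lemma fw_len: "length (fw k) \<ge> Suc k"
proof (induction k rule: fw.induct)
  case (3 m) then show ?case by simp
qed auto

lemma pre_append1: "pre (v @ w) \<Longrightarrow> pre v"
  by (auto simp: pre_def)

lemma pre_nobb: "pre v \<Longrightarrow> nobb v"
  using fw_nobb nobb_append1 by (metis pre_def)

lemma pre_noaaa: "pre v \<Longrightarrow> noaaa v"
  using fw_noaaa noaaa_append1 by (metis pre_def)

lemma pre_hd: "pre v \<Longrightarrow> v \<noteq> [] \<Longrightarrow> hd v = A"
  using fw_hd by (metis hd_append2 pre_def)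

lemma prefix_sig:
  "v @ z = sig x \<Longrightarrow> \<exists>u z'. x = u @ z' \<and> (v = sig u \<or> (v = sig u @ [A] \<and> (\<exists>z''. z' = A # z'')))"
proof (induction x arbitrary: v z)
  case Nil then show ?case by simp
next
  case (Cons c x)
  note IH = Cons.IH and pr = Cons.prems
  show ?case
  proof (cases "v = []")
    case True then show ?thesis by (intro exI[of _ "[]"] exI[of _ "c # x"]) simp
  next
    case vne: False
    show ?thesis
    proof (cases c)
      case cA: A
      show ?thesis
      proof (cases "v = [A]")
        case True
        then show ?thesis using cA by (intro exI[of _ "[]"] exI[of _ "c # x"]) simp
      next
        case False
        then obtain v'' where vv: "v = A # B # v''" and e: "v'' @ z = sig x"
          using pr cA vne by (cases v; cases "tl v") auto
        obtain u z' where "x = u @ z'" "v'' = sig u \<or> (v'' = sig u @ [A] \<and> (\<exists>z''. z' = A # z''))"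
          using IH[OF e] by blast
        then show ?thesis using cA vv by (intro exI[of _ "A # u"] exI[of _ z']) auto
      qed
    next
      case cB: B
      then obtain v' where vv: "v = A # v'" and e: "v' @ z = sig x"
        using pr vne by (cases v) auto
      obtain u z' where "x = u @ z'" "v' = sig u \<or> (v' = sig u @ [A] \<and> (\<exists>z''. z' = A # z''))"
        using IH[OF e] by blast
      then show ?thesis using cB vv by (intro exI[of _ "B # u"] exI[of _ z']) auto
    qed
  qed
qed

lemma Dsub: "pre v \<Longrightarrow> \<exists>u. pre u \<and> (v = sig u \<or> (v = sig u @ [A] \<and> pre (u @ [A])))"
proof -
  assume "pre v"
  then obtain k z where k: "fw k = v @ z" by (auto simp: pre_def)
  obtain z0 where z0: "fw (Suc k) = fw k @ z0" using fw_ext by blast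
  have "v @ (z @ z0) = fw (Suc k)" using z0 k by simp
  then have vs: "v @ (z @ z0) = sig (fw k)" by (simp only: fw_Suc)
  obtain u z' where u: "fw k = u @ z'" and d: "v = sig u \<or> (v = sig u @ [A] \<and> (\<exists>z''. z' = A # z''))"
    using prefix_sig[OF vs] by blast
  have pu: "pre u" using u by (auto simp: pre_def)
  show ?thesis
  proof (cases "v = sig u")
    case True then show ?thesis using pu by blast
  next
    case False
    then obtain z'' where "v = sig u @ [A]" "z' = A # z''" using d by blast
    then have "fw k = (u @ [A]) @ z''" using u by simp
    then have "pre (u @ [A])" by (auto simp: pre_def)
    then show ?thesis using pu \<open>v = sig u @ [A]\<close> by blast
  qed
qed


fun aac :: "letter list \<Rightarrow> nat" where
  "aac (x # y # r) = (if x = A \<and> y = A then 1 else 0) + aac (y # r)"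
| "aac _ = 0"

lemma aac_Cons: "aac (x # r) = (if x = A \<and> r \<noteq> [] \<and> hd r = A then 1 else 0) + aac r"
  by (cases r) auto

declare aac.simps(1)[simp del]

lemma count_aa_aac: "count_aa w = aac w"
proof (induction w)
  case Nil then show ?case by (simp add: count_aa_def)
next
  case (Cons x w)
  define S where "S w = {i. Suc i < length w \<and> w ! i = A \<and> w ! Suc i = A}" for w
  have cS: "count_aa w = card (S w)" for w by (simp add: count_aa_def S_def)
  have fS: "finite (S w)" unfolding S_def
    by (rule finite_subset[of _ "{..<length w}"]) auto
  have eq: "S (x # w) = (if x = A \<and> w \<noteq> [] \<and> hd w = A then insert 0 (Suc ` S w) else Suc ` S w)"
  proof -
    have "i \<in> S (x # w) \<longleftrightarrow> (i = 0 \<and> x = A \<and> w \<noteq> [] \<and> hd w = A) \<or> (\<exists>j. i = Suc j \<and> j \<in> S w)" for i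
      by (cases i) (auto simp: S_def hd_conv_nth)
    then show ?thesis by auto
  qed
  have "card (Suc ` S w) = card (S w)" by (simp add: card_image)
  then show ?case using Cons.IH fS unfolding cS eq by (auto simp: aac_Cons)
qed

lemma aac_sig: "aac (sig u) + (if u \<noteq> [] \<and> last u = B then 1 else 0) = count_b u"
proof (induction u)
  case Nil then show ?case by simp
next
  case (Cons c u)
  show ?case
  proof (cases c)
    case A then show ?thesis using Cons.IH by (auto simp: aac_Cons)
  next
    case B
    have "u \<noteq> [] \<Longrightarrow> hd (sig u) = A" using hd_sig by blast
    then show ?thesis using Cons.IH B by (auto simp: aac_Cons)
  qed
qed

lemma runs: "nobb w \<Longrightarrow> noaaa w \<Longrightarrow> w \<noteq> [] \<Longrightarrow> hd w = A \<Longrightarrow> last w = B \<Longrightarrow>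
  ca w = count_b w + aac w"
proof (induction "length w" arbitrary: w rule: less_induct)
  case less
  obtain w1 where w: "w = A # w1" using less.prems by (cases w) auto
  have w1ne: "w1 \<noteq> []" using w less.prems by auto
  show ?case
  proof (cases "hd w1")
    case B
    then obtain r where r: "w1 = B # r" using w1ne by (cases w1) auto
    show ?thesis
    proof (cases "r = []")
      case True then show ?thesis using w r by (simp add: aac_Cons)
    next
      case False
      have "hd r = A" using less.prems(1) w r False by (cases r; cases "hd r") (auto simp: nobb_Cons)
      moreover have "nobb r" "noaaa r" using less.prems(1,2) w r
        by (auto simp: nobb_Cons noaaa_Cons split: if_splits)
      moreover have "last r = B" using less.prems(5) w r False by simp
      ultimately have "ca r = count_b r + aac r" using less.hyps[of r] w r False by simp
      then show ?thesis using w r by (simp add: aac_Cons)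
    qed
  next
    case A
    then obtain r where r: "w1 = A # r" using w1ne by (cases w1) auto
    have rne: "r \<noteq> []" using less.prems(5) w r by auto
    have "hd r = B" using less.prems(2) w r rne by (cases r; cases "hd r") (auto simp: noaaa_Cons)
    then obtain r' where r': "r = B # r'" using rne by (cases r) auto
    show ?thesis
    proof (cases "r' = []")
      case True then show ?thesis using w r r' by (simp add: aac_Cons)
    next
      case False
      have "hd r' = A" using less.prems(1) w r r' False by (cases r'; cases "hd r'") (auto simp: nobb_Cons)
      moreover have "nobb r'" "noaaa r'" using less.prems(1,2) w r r'
        by (auto simp: nobb_Cons noaaa_Cons split: if_splits)
      moreover have "last r' = B" using less.prems(5) w r r' False by simp
      ultimately have "ca r' = count_b r' + aac r'" using less.hyps[of r'] w r r' False by simp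
      then show ?thesis using w r r' \<open>hd r' = A\<close> False by (simp add: aac_Cons)
    qed
  qed
qed


lemma letter_not_A[simp]: "x \<noteq> A \<longleftrightarrow> x = B" and letter_not_B[simp]: "x \<noteq> B \<longleftrightarrow> x = A"
  by (cases x; simp)+

lemma ca_pos: "u \<noteq> [] \<Longrightarrow> hd u = A \<Longrightarrow> ca u \<ge> 1"
  by (cases u) auto

lemma len_sig_gt: "pre u \<Longrightarrow> u \<noteq> [] \<Longrightarrow> length u < length (sig u)"
  using ca_pos[of u] pre_hd[of u] length_sig[of u] by simp

lemma butlast_last_cases:
  assumes "u \<noteq> []"
  obtains u0 where "u = u0 @ [last u]"
  using assms append_butlast_last_id by metis

lemma pre_last_B:
  assumes "pre u" "u = u0 @ [B]"
  shows "u0 \<noteq> [] \<and> last u0 = A"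
proof -
  have "u0 \<noteq> []" using pre_hd[OF assms(1)] assms(2) by auto
  moreover have "last u0 = A"
  proof (rule ccontr)
    assume "last u0 \<noteq> A"
    then have "last u0 = B" by (cases "last u0") auto
    then have "u = butlast u0 @ [B, B]" using assms(2) \<open>u0 \<noteq> []\<close>
      by (metis append_butlast_last_id append_Cons append_Nil append_assoc)
    then show False using pre_nobb[OF assms(1)] nobb_BB by metis
  qed
  ultimately show ?thesis by blast
qed

lemma C_AA:
  assumes p: "pre (t @ [B])"
  shows "C (t @ [A]) = C t"
proof -
  obtain s where ps: "pre s" and d: "t @ [B] = sig s \<or> (t @ [B] = sig s @ [A] \<and> pre (s @ [A]))"
    using Dsub[OF p] by blast
  have e: "t @ [B] = sig s" using d by auto
  then have sne: "s \<noteq> []" by auto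
  have "last (sig s) = B" using e[symmetric] by simp
  then have "last s = A" using last_sig[OF sne] by (auto split: if_splits)
  then obtain s0 where s0: "s = s0 @ [A]" using sne butlast_last_cases by metis
  then have t: "t = sig s0 @ [A]" using e by simp
  show ?thesis
  proof (cases "s0 = [] \<or> last s0 = A")
    case True
    have "C (t @ [A]) = C (sig s0 @ replicate 2 A)" using t by (simp add: numeral_2_eq_2)
    also have "\<dots> = C s0 + C (s0 @ [B])" using Crec[OF True] by simp
    also have "\<dots> = C (sig s0 @ replicate 1 A)" using Crec[OF True, of 1] by simp
    also have "\<dots> = C t" using t by simp
    finally show ?thesis .
  next
    case False
    then have "last s0 = B" by (cases "last s0") auto
    then obtain s1 where s1: "s0 = s1 @ [B]" using False butlast_last_cases by metis
    have c1: "s1 = [] \<or> last s1 = A"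
    proof (cases "s1 = []")
      case False
      have "pre s0" using ps s0 pre_append1 by blast
      then show ?thesis using pre_last_B[OF _ s1] by blast
    qed simp
    have "C (t @ [A]) = C (sig s1 @ replicate 3 A)" using t s1 by (simp add: numeral_3_eq_3)
    also have "\<dots> = C s1 + C (s1 @ [B])" using Crec[OF c1] by simp
    also have "\<dots> = C (sig s1 @ replicate 2 A)" using Crec[OF c1, of 2] by simp
    also have "\<dots> = C t" using t s1 by (simp add: numeral_2_eq_2)
    finally show ?thesis .
  qed
qed

lemma FL:
  assumes p: "pre (u0 @ [A, A])" and u0: "u0 = [] \<or> last u0 = B"
  shows "C (u0 @ [A, B]) = C u0"
proof -
  obtain w where pw: "pre w" and d: "u0 @ [A, A] = sig w \<or> (u0 @ [A, A] = sig w @ [A] \<and> pre (w @ [A]))"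
    using Dsub[OF p] by blast
  have e: "sig w = u0 @ [A]"
  proof (cases "u0 @ [A, A] = sig w")
    case True
    then have wne: "w \<noteq> []" by auto
    have "last (sig w) = A" using True[symmetric] by simp
    then have "last w = B" using last_sig[OF wne] by (auto split: if_splits)
    then obtain w0 where w0: "w = w0 @ [B]" using wne butlast_last_cases by metis
    then have "pre w0 \<and> last w0 = A" using pre_last_B[OF pw w0] pre_append1 pw by blast
    then have "last (sig w0) = B" using last_sig[of w0] pre_last_B[OF pw w0] by auto
    moreover have "sig w0 @ [A] = u0 @ [A, A]" using True w0 by simp
    then have "sig w0 = u0 @ [A]" by (metis append.assoc append_Cons append_Nil append1_eq_conv)
    ultimately show ?thesis by simp
  next
    case False
    then show ?thesis using d by (metis append.assoc append_Cons append_Nil append1_eq_conv)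
  qed
  then have wne: "w \<noteq> []" by auto
  have "last (sig w) = A" using e by simp
  then have "last w = B" using last_sig[OF wne] by (auto split: if_splits)
  then obtain t where t: "w = t @ [B]" using wne butlast_last_cases by metis
  have st: "sig t = u0" using e t by simp
  have ct: "t = [] \<or> last t = A"
  proof (cases "t = []")
    case False
    then have "u0 \<noteq> []" using st by auto
    then have "last (sig t) = B" using u0 st by simp
    then show ?thesis using last_sig[OF False] by (auto split: if_splits)
  qed simp
  have "C (u0 @ [A, B]) = C (sig (t @ [A]) @ replicate 0 A)" using st by simp
  also have "\<dots> = C (t @ [A])" using Crec[of "t @ [A]" 0] by simp
  also have "\<dots> = C t" using C_AA pw t by simp
  also have "\<dots> = C (sig t @ replicate 0 A)" using Crec[OF ct, of 0] by simp
  also have "\<dots> = C u0" using st by simp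
  finally show ?thesis .
qed


lemma pre_last_A_A:
  assumes "pre (u0 @ [A, A])"
  shows "u0 = [] \<or> last u0 = B"
proof (rule ccontr)
  assume "\<not> (u0 = [] \<or> last u0 = B)"
  then have "u0 \<noteq> []" "last u0 = A" by auto
  then have "u0 @ [A, A] = butlast u0 @ [A, A, A]"
    by (metis append_butlast_last_id append_Cons append_Nil append_assoc)
  then show False using pre_noaaa[OF assms] noaaa_AAA by metis
qed

lemma main: "pre v \<Longrightarrow> v \<noteq> [] \<Longrightarrow> C v = (if last v = A then count_b v + 1 else aac v + 1)"
proof (induction "length v" arbitrary: v rule: less_induct)
  case less
  note pv = less.prems(1) and vne = less.prems(2)
  have IH: "C u = (if last u = A then count_b u + 1 else aac u + 1)"
    if "length u < length v" "pre u" "u \<noteq> []" for u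
    using less.hyps that by blast
  obtain u where pu: "pre u" and d: "v = sig u \<or> (v = sig u @ [A] \<and> pre (u @ [A]))"
    using Dsub[OF pv] by blast
  have lu: "u \<noteq> [] \<Longrightarrow> length u < length v" using len_sig_gt[OF pu] d by auto
  have caseB: "C v = count_b v + 1 \<and> last v = A"
    if u0: "u = u0 @ [B]" and j: "j > 0" and vj: "v = sig u0 @ replicate j A" for u0 j
  proof -
    have u0p: "u0 \<noteq> []" "last u0 = A" using pre_last_B[OF pu u0] by auto
    have pu0: "pre u0" using pu u0 pre_append1 by blast
    have "C v = C u0 + C u" using Crec[of u0 j] u0p j vj u0 by simp
    also have "C u0 = count_b u0 + 1" using IH[OF _ pu0 u0p(1)] lu u0 u0p by simp
    also have "C u = aac u + 1" using IH[OF _ pu] lu u0 by simp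
    finally have cv: "C v = count_b u0 + aac u + 2" by simp
    have r: "ca u = count_b u + aac u"
      using runs[of u] pre_nobb[OF pu] pre_noaaa[OF pu] pre_hd[OF pu] u0 by simp
    have "count_b v = ca u" using vj u0 by (simp add: cb_sig)
    then have "count_b v = count_b u0 + 1 + aac u" using r u0 by simp
    then show ?thesis using cv vj j by simp
  qed
  show ?case
  proof (cases "v = sig u")
    case vs: True
    then have une: "u \<noteq> []" using vne by auto
    show ?thesis
    proof (cases "last u = A")
      case True
      have "C v = C u" using Crec[of u 0] True vs by simp
      also have "\<dots> = count_b u + 1" using IH[OF lu[OF une] pu une] True by simp
      finally have cv: "C v = count_b u + 1" .
      have "last v = B" using vs last_sig[OF une] True by simp
      moreover have "aac v = count_b u" using aac_sig[of u] True vs by simp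
      ultimately show ?thesis using cv by simp
    next
      case False
      then obtain u0 where u0: "u = u0 @ [B]" using une butlast_last_cases by (metis letter_not_A)
      have "v = sig u0 @ replicate 1 A" using vs u0 by simp
      from caseB[OF u0 _ this] show ?thesis by simp
    qed
  next
    case False
    then have vs: "v = sig u @ [A]" and pua: "pre (u @ [A])" using d by auto
    show ?thesis
    proof (cases "u = []")
      case True
      then have "v = sig [] @ replicate 1 A" using vs by simp
      then have "C v = C [] + C [B]" using Crec[of "[]" 1] by simp
      then show ?thesis using True vs C_Nil C_B by simp
    next
      case une: False
      show ?thesis
      proof (cases "last u = A")
        case True
        then obtain u0 where u0: "u = u0 @ [A]" using une butlast_last_cases by metis
        have pa: "pre (u0 @ [A, A])" using pua u0 by simp
        have c0: "u0 = [] \<or> last u0 = B" using pre_last_A_A[OF pa] .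
        have "C v = C u + C (u @ [B])" using Crec[of u 1] True vs by simp
        also have "C (u @ [B]) = C u0" using FL[OF pa c0] u0 by simp
        also have "C u = count_b u + 1" using IH[OF lu[OF une] pu une] True by simp
        finally have cv: "C v = count_b u + 1 + C u0" .
        have lv: "last v = A" using vs by simp
        have cbv: "count_b v = ca u" using vs by (simp add: cb_sig)
        show ?thesis
        proof (cases "u0 = []")
          case True
          then show ?thesis using cv lv cbv u0 C_Nil by simp
        next
          case False
          have pu0: "pre u0" using pu u0 pre_append1 by blast
          have "C u0 = aac u0 + 1" using IH[OF _ pu0 False] lu[OF une] u0 c0 False by simp
          moreover have "ca u0 = count_b u0 + aac u0"
            using runs[of u0] pre_nobb[OF pu0] pre_noaaa[OF pu0] pre_hd[OF pu0] False c0 by simp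
          ultimately show ?thesis using cv lv cbv u0 by simp
        qed
      next
        case False
        then obtain u0 where u0: "u = u0 @ [B]" using une butlast_last_cases by (metis letter_not_A)
        have "v = sig u0 @ replicate 2 A" using vs u0 by (simp add: numeral_2_eq_2)
        from caseB[OF u0 _ this] show ?thesis by simp
      qed
    qed
  qed
qed



lemma m5: "(z::nat)^2 mod 5 = 0 \<Longrightarrow> 5 dvd z"
proof -
  assume h: "z^2 mod 5 = 0"
  have e: "z^2 mod 5 = ((z mod 5)^2) mod 5" by (simp add: power_mod)
  have "z mod 5 < 5" by simp
  then have "z mod 5 = 0 \<or> z mod 5 = 1 \<or> z mod 5 = 2 \<or> z mod 5 = 3 \<or> z mod 5 = 4" by linarith
  then have "z mod 5 = 0" using h e by (auto simp: power2_eq_square)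
  then show "5 dvd z" by (simp add: dvd_eq_mod_eq_0)
qed

lemma sq5_nat: "(y::nat)^2 = 5 * x^2 \<Longrightarrow> x = 0"
proof (induction x arbitrary: y rule: less_induct)
  case (less x)
  show ?case
  proof (rule ccontr)
    assume x0: "x \<noteq> 0"
    have "y^2 mod 5 = 0" using less.prems by simp
    then have "5 dvd y" by (rule m5)
    then obtain z where yz: "y = 5 * z" by (auto elim: dvdE)
    then have "25 * z^2 = 5 * x^2" using less.prems by (simp add: power_mult_distrib)
    then have xz: "x^2 = 5 * z^2" by simp
    then have "x^2 mod 5 = 0" by simp
    then have "5 dvd x" by (rule m5)
    then obtain w where xw: "x = 5 * w" by (auto elim: dvdE)
    then have "z^2 = 5 * w^2" using xz by (simp add: power_mult_distrib)
    moreover have "w < x" using xw x0 by simp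
    ultimately have "w = 0" using less.IH by blast
    then show False using xw x0 by simp
  qed
qed
definition al :: real where "al = (3 - sqrt 5) / 2"

lemma s5: "sqrt 5 * sqrt 5 = (5::real)" by simp

lemma s5_bounds: "2 < sqrt (5::real)" "sqrt (5::real) < 3"
proof -
  have "sqrt (4::real) < sqrt 5" by (rule real_sqrt_less_mono) simp
  then show "2 < sqrt (5::real)" by simp
  have "sqrt (5::real) < sqrt 9" by (rule real_sqrt_less_mono) simp
  then show "sqrt (5::real) < 3" by simp
qed

lemma al_bounds: "0 < al" "al < 1/2" "al < 1"
  using s5_bounds by (auto simp: al_def)

lemma al_sq: "al * al = 3 * al - 1"
  by (simp add: al_def algebra_simps s5 field_simps)

lemma al_irr: "m > 0 \<Longrightarrow> real m * al \<noteq> of_int k"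
proof
  assume m: "m > 0" and e: "real m * al = of_int k"
  then have "sqrt 5 * real m = 3 * real m - 2 * of_int k" by (simp add: al_def algebra_simps)
  then have "(sqrt 5 * real m)^2 = (3 * real m - 2 * of_int k)^2" by simp
  then have "5 * (real m)^2 = (3 * real m - 2 * of_int k)^2" by (simp add: power_mult_distrib)
  then have ie: "5 * (int m)^2 = (3 * int m - 2 * k)^2"
    by (metis (mono_tags, opaque_lifting) of_int_eq_iff of_int_mult of_int_numeral of_int_of_nat_eq of_int_power of_int_diff)
  define y where "y = nat \<bar>3 * int m - 2 * k\<bar>"
  have "int (y^2) = (3 * int m - 2 * k)^2" by (simp add: y_def)
  then have "int (y^2) = int (5 * m^2)" using ie by simp
  then have "y^2 = 5 * m^2" by (simp only: of_nat_eq_iff)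
  then show False using sq5_nat[of y m] m by simp
qed

lemma AR:
  fixes m b :: nat
  assumes fb: "int b = \<lfloor>real (m + 1) * al\<rfloor>"
  shows "b \<le> m" and "\<lfloor>real (2 * m - b + 1) * al\<rfloor> = int (m - b)"
    and "\<lfloor>real (2 * m - b + 2) * al\<rfloor> = int (m - b)"
proof -
  define x where "x = real m + 1"
  define p where "p = x * al"
  define q where "q = al * p"
  define r where "r = real b * al"
  have pp: "p = real (m + 1) * al" by (simp add: p_def x_def)
  have "of_int (int b) \<le> real (m + 1) * al \<and> real (m + 1) * al < of_int (int b) + 1"
    using fb[symmetric] by (simp only: floor_eq_iff)
  then have fl: "real b \<le> p" "p < real b + 1" using pp by simp_all
  have pne: "p \<noteq> real b" using al_irr[of "m + 1" "int b"] unfolding pp by simp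
  have e1: "x = 3 * p - q" unfolding q_def p_def
  proof -
    have "x * (al * al) = x * (3 * al - 1)" using al_sq by simp
    then show "x = 3 * (x * al) - al * (x * al)" by (simp add: algebra_simps)
  qed
  have e2: "(p - real b) * (1 - al) = p - q - real b + r" unfolding q_def r_def by (simp add: algebra_simps)
  have t0: "0 < (p - real b) * (1 - al)" using fl pne al_bounds by simp
  have t1: "(p - real b) * (1 - al) \<le> 1 * (1 - al)"
    using fl al_bounds by (intro mult_right_mono) auto
  have "p < x" unfolding p_def x_def using al_bounds
  proof -
    have "(real m + 1) * al < (real m + 1) * 1"
      using al_bounds by (intro mult_strict_left_mono) auto
    then show "(real m + 1) * al < real m + 1" by simp
  qed
  then show bm: "b \<le> m" using fl x_def by linarith
  have X1: "real (2 * m - b + 1) * al = 2 * p - r - al"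
    using bm unfolding p_def r_def x_def by (simp add: of_nat_diff algebra_simps)
  have X2: "real (2 * m - b + 2) * al = 2 * p - r"
    using bm unfolding p_def r_def x_def by (simp add: of_nat_diff algebra_simps)
  have mb: "real (m - b) = x - 1 - real b" using bm x_def by (simp add: of_nat_diff)
  show "\<lfloor>real (2 * m - b + 1) * al\<rfloor> = int (m - b)"
    by (rule floor_unique) (use X1 mb e1 e2 t0 t1 al_bounds in auto)
  show "\<lfloor>real (2 * m - b + 2) * al\<rfloor> = int (m - b)"
    by (rule floor_unique) (use X2 mb e1 e2 t0 t1 al_bounds in auto)
qed


lemma floor_small: "0 \<le> x \<Longrightarrow> x < 1 \<Longrightarrow> \<lfloor>x::real\<rfloor> = 0"
  by (rule floor_unique) auto

lemma mech: "pre v \<Longrightarrow> int (count_b v) = \<lfloor>real (length v + 1) * al\<rfloor>"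
proof (induction "length v" arbitrary: v rule: less_induct)
  case less
  note pv = less.prems
  obtain u where pu: "pre u" and d: "v = sig u \<or> (v = sig u @ [A] \<and> pre (u @ [A]))"
    using Dsub[OF pv] by blast
  show ?case
  proof (cases "u = []")
    case True
    then have "v = [] \<or> v = [A]" using d by auto
    then show ?thesis using al_bounds floor_small[of al] floor_small[of "2 * al"] by auto
  next
    case une: False
    have lu: "length u < length v" using len_sig_gt[OF pu une] d by auto
    define m where "m = length u"
    define b where "b = count_b u"
    have fb: "int b = \<lfloor>real (m + 1) * al\<rfloor>" using less.hyps[OF lu pu] by (simp add: m_def b_def)
    note ar = AR[OF fb]
    have cau: "ca u = m - b" using ca_cb_len[of u] by (simp add: m_def b_def)
    have cbv: "count_b v = m - b" using d cau by (auto simp: cb_sig)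
    show ?thesis
    proof (cases "v = sig u")
      case True
      then have "length v + 1 = 2 * m - b + 1" using length_sig[of u] cau ar(1) by (simp add: m_def)
      then show ?thesis using ar(2) cbv by simp
    next
      case False
      then have "v = sig u @ [A]" using d by auto
      then have "length v + 1 = 2 * m - b + 2" using length_sig[of u] cau ar(1) by (simp add: m_def)
      then show ?thesis using ar(3) cbv by simp
    qed
  qed
qed

lemma phi2: "phi ^ 2 * al = 1"
  by (simp add: phi_def al_def power2_eq_square algebra_simps s5 field_simps)

lemma phi3: "phi ^ 3 * (1 - 2 * al) = 1"
proof -
  have "phi ^ 3 = (2 + sqrt 5)"
    by (simp add: phi_def power3_eq_cube algebra_simps s5 field_simps)
  moreover have "(2 + sqrt 5) * (1 - 2 * al) = 1"
    by (simp add: al_def algebra_simps s5)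
  ultimately show ?thesis by simp
qed

lemma phi_ne: "phi \<noteq> 0"
  using s5_bounds by (simp add: phi_def)

theorem theorem1:
  fixes n :: nat
  assumes "n \<ge> 1"
  shows "(fib_inf n = A \<longrightarrow>
            int (V n) = \<lceil>real n / phi ^ 2\<rceil> \<and> V n = count_b (fib_prefix n) + 1)
       \<and> (fib_inf n = B \<longrightarrow>
            int (V n) = \<lceil>real n / phi ^ 3\<rceil> \<and> V n = count_aa (fib_prefix n) + 1)"
proof -
  define v where "v = fib_prefix n"
  have lf: "length (fw n) \<ge> Suc n" by (rule fw_len)
  have lv: "length v = n" using lf by (simp add: v_def fib_prefix_def)
  have pv: "pre v" unfolding pre_def v_def fib_prefix_def
    by (intro exI[of _ n] exI[of _ "drop n (fw n)"]) simp
  have vne: "v \<noteq> []" using lv assms by auto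
  have lastv: "last v = fib_inf n"
  proof -
    have "last v = v ! (n - 1)" using vne lv by (simp add: last_conv_nth)
    also have "\<dots> = fw n ! (n - 1)" using assms by (simp add: v_def fib_prefix_def)
    finally show ?thesis by (simp add: fib_inf_def)
  qed
  define w where "w = butlast v"
  have vw: "v = w @ [last v]" using vne by (simp add: w_def)
  have pw: "pre w" using pv vw pre_append1 by metis
  have lw: "length w + 1 = n" using lv assms by (simp add: w_def)
  have cbv: "int (count_b v) = \<lfloor>real (n + 1) * al\<rfloor>" using mech[OF pv] lv by simp
  have cbw: "int (count_b w) = \<lfloor>real n * al\<rfloor>" using mech[OF pw] by (simp only: lw)
  have cvw: "count_b v = count_b w + (if last v = B then 1 else 0)"
    using vw by (metis cb_simps(1,2,3) add.right_neutral)
  have Vv: "V n = (if last v = A then count_b v + 1 else aac v + 1)"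
    using main[OF pv vne] V_C v_def by simp
  define F where "F = \<lfloor>real n * al\<rfloor>"
  have F1: "of_int F \<le> real n * al" "real n * al < of_int F + 1"
    unfolding F_def by (simp, linarith)
  have Fne: "real n * al \<noteq> of_int F" using al_irr[of n F] assms by simp
  have div2: "real n / phi ^ 2 = real n * al"
    using phi2 phi_ne by (simp add: field_simps)
  have h3: "1 - 2 * al = 1 / phi ^ 3" using phi3 phi_ne by (simp add: eq_divide_eq mult.commute)
  have div3: "real n / phi ^ 3 = real n * (1 - 2 * al)"
    by (simp only: h3) simp
  show ?thesis
  proof (intro conjI impI)
    assume fa: "fib_inf n = A"
    then have la: "last v = A" using lastv by simp
    then have "V n = count_b v + 1" using Vv by simp
    then show "V n = count_b (fib_prefix n) + 1" using v_def by simp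
    have "int (V n) = F + 1" using \<open>V n = count_b v + 1\<close> cvw la cbw F_def by simp
    moreover have "\<lceil>real n * al\<rceil> = F + 1"
      by (rule ceiling_unique) (use F1 Fne in auto)
    ultimately show "int (V n) = \<lceil>real n / phi ^ 2\<rceil>" using div2 by simp
  next
    assume fb: "fib_inf n = B"
    then have lb: "last v = B" using lastv by simp
    then have Va: "V n = aac v + 1" using Vv by simp
    then show "V n = count_aa (fib_prefix n) + 1" using v_def count_aa_aac by simp
    have r: "ca v = count_b v + aac v"
      using runs[of v] pre_nobb[OF pv] pre_noaaa[OF pv] pre_hd[OF pv vne] vne lb by simp
    have cl: "ca v + count_b v = n" using ca_cb_len[of v] lv by simp
    have cbF: "int (count_b v) = F + 1" using cvw lb cbw F_def by simp
    have Vn: "int (V n) = int n - 2 * F - 1" using Va r cl cbF by linarith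
    have "of_int (F + 1) \<le> real (n + 1) * al" using cbv cbF by (metis of_int_floor_le)
    then have F2: "of_int F + 1/2 \<le> real n * al" using al_bounds by (simp add: algebra_simps)
    have "\<lceil>real n * (1 - 2 * al)\<rceil> = int n - 2 * F - 1"
      by (rule ceiling_unique) (use F1 F2 in \<open>auto simp: algebra_simps\<close>)
    then show "int (V n) = \<lceil>real n / phi ^ 3\<rceil>" using div3 Vn by simp
  qed
qed

end
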